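(* Let $p\equiv 1\pmod 4$ be a prime and let $u$ be an integer with $u^2\equiv -1\pmod p$ and $1\le u<p/2$. Define points $\mathbf{x}_i=(x_i,y_i)\in\mathbb{Z}^2$ (the extended Brillhart sequence) by $\mathbf{x}_0=(p,0)$, $\mathbf{x}_1=(u,1)$, and, for $i\ge 1$ with $x_i>0$, write $x_{i-1}=q_ix_i+r_i$ with $0\le r_i<x_i$ (so $q_i=\lfloor x_{i-1}/x_i\rfloor$) and set $\mathbf{x}_{i+1}=\mathbf{x}_{i-1}-q_i\mathbf{x}_i=(r_i,\,y_{i-1}-q_iy_i)$. Define also the modified Lagrange (ML) sequence $\mathbf{x}'_i$ by $\mathbf{x}'_0=(p,0)$, $\mathbf{x}'_1=(u,1)$, and, for $i\ge1$, as long as $\|\mathbf{x}'_i\|\le\|\mathbf{x}'_{i-1}\|$, \[ q'_i=\left\lfloor\frac{\mathbf{x}'_i\cdot\mathbf{x}'_{i-1}}{\|\mathbf{x}'_i\|^2}\right\rfloor,\qquad \mathbf{x}'_{i+1}=\mathbf{x}'_{i-1}-q'_i\mathbf{x}'_i. \] Then for every $i\ge 1$ such that $x_i>|y_i|$ (and for which the ML step is defined), $q_i=q'_i$; equivalently, \[ \left\lfloor\frac{x_{i-1}}{x_i}\right\rfloor=\left\lfloor\frac{x_{i-1}x_i+y_{i-1}y_i}{x_i^2+y_i^2}\right\rfloor, \] so that the Brillhart sequence and the ML sequence coincide until the ML algorithm terminates.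
   Context: Here $\cdot$ denotes the standard dot product and $\|\cdot\|$ the Euclidean norm on $\mathbb{R}^2$. The sequence $(x_i)$ is exactly the sequence of remainders of the Euclidean algorithm applied to $p$ and $u$. *)

theory Defs
  imports Complex_Main "HOL-Number_Theory.Cong"
begin

type_synonym pt = "int \<times> int"

definition pt_sub :: "pt \<Rightarrow> pt \<Rightarrow> pt" where
  "pt_sub a b = (fst a - fst b, snd a - snd b)"

definition pt_scale :: "int \<Rightarrow> pt \<Rightarrow> pt" where
  "pt_scale q a = (q * fst a, q * snd a)"

definition pt_dot :: "pt \<Rightarrow> pt \<Rightarrow> int" where
  "pt_dot a b = fst a * fst b + snd a * snd b"

definition pt_sqnorm :: "pt \<Rightarrow> int" where
  "pt_sqnorm a = pt_dot a a"

(* Extended Brillhart sequence: brill_pair p u n = (x_n, x_{n+1}).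
   Once the step is undefined (x_n \<le> 0) the sequence is frozen; the
   theorem only looks at indices where the step is defined. *)
fun brill_pair :: "int \<Rightarrow> int \<Rightarrow> nat \<Rightarrow> pt \<times> pt" where
  "brill_pair p u 0 = ((p, 0), (u, 1))"
| "brill_pair p u (Suc n) =
     (let (a, b) = brill_pair p u n in
      if fst b > 0 then (b, pt_sub a (pt_scale (fst a div fst b) b)) else (b, b))"

definition brill :: "int \<Rightarrow> int \<Rightarrow> nat \<Rightarrow> pt" where
  "brill p u n = fst (brill_pair p u n)"

definition brill_q :: "int \<Rightarrow> int \<Rightarrow> nat \<Rightarrow> int" where
  "brill_q p u i = \<lfloor>real_of_int (fst (brill p u (i - 1))) / real_of_int (fst (brill p u i))\<rfloor>"

(* Modified Lagrange sequence: ml_pair p u n = (x'_n, x'_{n+1}); frozen once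
   the condition ||x'_i|| \<le> ||x'_{i-1}|| fails. *)
definition ml_quot :: "pt \<Rightarrow> pt \<Rightarrow> int" where
  "ml_quot a b = \<lfloor>real_of_int (pt_dot b a) / real_of_int (pt_sqnorm b)\<rfloor>"

fun ml_pair :: "int \<Rightarrow> int \<Rightarrow> nat \<Rightarrow> pt \<times> pt" where
  "ml_pair p u 0 = ((p, 0), (u, 1))"
| "ml_pair p u (Suc n) =
     (let (a, b) = ml_pair p u n in
      if pt_sqnorm b \<le> pt_sqnorm a then (b, pt_sub a (pt_scale (ml_quot a b) b)) else (b, b))"

definition ml :: "int \<Rightarrow> int \<Rightarrow> nat \<Rightarrow> pt" where
  "ml p u n = fst (ml_pair p u n)"

definition ml_q :: "int \<Rightarrow> int \<Rightarrow> nat \<Rightarrow> int" where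
  "ml_q p u i = ml_quot (ml p u (i - 1)) (ml p u i)"

definition ml_defined_upto :: "int \<Rightarrow> int \<Rightarrow> nat \<Rightarrow> bool" where
  "ml_defined_upto p u i \<longleftrightarrow>
     (\<forall>j\<in>{1..i}. pt_sqnorm (ml p u j) \<le> pt_sqnorm (ml p u (j - 1)))"

end

theory Submission
  imports Defs
begin

definition goodp :: "int \<Rightarrow> int \<Rightarrow> int \<Rightarrow> int \<Rightarrow> int \<Rightarrow> int \<Rightarrow> bool" where
 "goodp p u a b c d \<longleftrightarrow> 0 < a \<and> 0 \<le> c \<and> c < a \<and> p dvd (a - u*b) \<and> p dvd (c - u*d)
    \<and> \<bar>a*d - b*c\<bar> = p \<and> b*d \<le> 0 \<and> \<bar>b\<bar> \<le> \<bar>d\<bar>"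

lemma good_step:
  assumes g: "goodp p u a b c d" and c: "c > 0"
  shows "goodp p u c d (a - (a div c) * c) (b - (a div c) * d)"
proof -
  define q where "q = a div c"
  have q1: "q \<ge> 1" using g c unfolding q_def goodp_def
    by (metis div_self div_int_pos_iff zdiv_mono1 less_le order.refl) 
  have r: "a - q*c = a mod c" unfolding q_def by (metis minus_div_mult_eq_mod)
  have r0: "0 \<le> a mod c" "a mod c < c" using c by auto
  have d1: "p dvd (a - q*c) - u*(b - q*d)"
  proof -
    have "(a - q*c) - u*(b - q*d) = (a - u*b) - q*(c - u*d)" by (simp add: algebra_simps)
    thus ?thesis using g unfolding goodp_def by (metis dvd_diff dvd_mult)
  qed
  have det: "\<bar>c*(b - q*d) - d*(a - q*c)\<bar> = p"
  proof -
    have "c*(b - q*d) - d*(a - q*c) = -(a*d - b*c)" by (simp add: algebra_simps)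
    hence "\<bar>c*(b - q*d) - d*(a - q*c)\<bar> = \<bar>a*d - b*c\<bar>" by (simp only: abs_minus_cancel)
    thus ?thesis using g unfolding goodp_def by simp
  qed
  have bd: "b*d \<le> 0" "\<bar>b\<bar> \<le> \<bar>d\<bar>" using g unfolding goodp_def by auto
  have s1: "d*(b - q*d) \<le> 0"
  proof -
    have "d*(b-q*d) = b*d - q*(d*d)" by (simp add: algebra_simps)
    moreover have "q*(d*d) \<ge> 0" using q1 by simp
    ultimately show ?thesis using bd by linarith
  qed
  have s2: "\<bar>d\<bar> \<le> \<bar>b - q*d\<bar>"
  proof (cases "d \<ge> 0")
    case True
    hence "b \<le> 0 \<or> d = 0" using bd by (metis mult_pos_pos linorder_not_le order_le_less) 
    moreover have "q*d \<ge> d" using True q1 by (simp add: mult_right_mono[of 1 q d, simplified])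
    ultimately have "b - q*d \<le> -d \<or> d = 0" by linarith
    thus ?thesis using True by auto
  next
    case False
    hence "b \<ge> 0" using bd by (metis mult_neg_neg linorder_not_le order_le_less zero_less_mult_iff)
    moreover have "q*d \<le> d" using False q1 by (simp add: mult_right_mono_neg[of 1 q d, simplified])
    ultimately have "b - q*d \<ge> -d" by linarith
    thus ?thesis using False by linarith
  qed
  show ?thesis unfolding goodp_def q_def[symmetric]
    using c r r0 d1 det s1 s2 g unfolding goodp_def by auto
qed

lemma key:
  assumes g: "goodp p u a b c d" and pp: "p > 0" and pu: "p dvd u^2 + 1" and dc: "\<bar>d\<bar> < c"
  shows "(a*c + b*d) div (c^2 + d^2) = a div c"
proof -
  have c: "c > 0" using dc by linarith
  define q where "q = a div c"
  define r where "r = a - q*c"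
  define e where "e = b - q*d"
  have g2: "goodp p u c d r e" using good_step[OF g c] unfolding q_def r_def e_def .
  have r0: "0 \<le> r" "r < c" using g2 unfolding goodp_def by auto
  have de: "d*e \<le> 0" and det: "\<bar>c*e - d*r\<bar> = p" and dv1: "p dvd c - u*d" and dv2: "p dvd r - u*e"
    using g2 unfolding goodp_def by auto
  define s where "s = r*c + d*e"
  have eq: "a*c + b*d = q*(c^2+d^2) + s" unfolding s_def r_def e_def by (simp add: algebra_simps power2_eq_square)
  have sdvd: "p dvd s"
  proof -
    have "s = (r - u*e)*c + e*(u*(c - u*d)) + e*d*(u^2+1)" unfolding s_def by (simp add: algebra_simps power2_eq_square)
    thus ?thesis using dv1 dv2 pu by simp
  qed
  have ce: "c*\<bar>e\<bar> \<le> p"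
  proof (cases "e > 0")
    case True
    hence "d \<le> 0" using de by (simp add: mult_le_0_iff)
    hence "d*r \<le> 0" using r0 by (simp add: mult_nonpos_nonneg)
    thus ?thesis using det True c by auto
  next
    case False
    show ?thesis
    proof (cases "e = 0")
      case True thus ?thesis using pp by simp
    next
      case False2: False
      hence en: "e < 0" using False by simp
      hence "d \<ge> 0" using de by (simp add: mult_le_0_iff)
      hence "d*r \<ge> 0" using r0 by simp
      moreover have "c*e < 0" using en c by (simp add: mult_pos_neg)
      ultimately show ?thesis using det en by auto
    qed
  qed
  have sgt: "s > -p"
  proof (cases "e = 0")
    case True
    have "r*c \<ge> 0" using r0 c by simp
    then show ?thesis unfolding s_def using True pp by simp
  next
    case False
    have "\<bar>d\<bar>*\<bar>e\<bar> < c*\<bar>e\<bar>" using False dc by simp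
    moreover have "d*e = -(\<bar>d\<bar>*\<bar>e\<bar>)" using de by (simp add: abs_mult[symmetric])
    moreover have "r*c \<ge> 0" using r0 c by simp
    ultimately show ?thesis unfolding s_def using ce by linarith
  qed
  have s0: "s \<ge> 0"
  proof -
    obtain k where k: "s = p*k" using sdvd by blast
    have "p*k > p*(-1)" using k sgt by simp
    hence "k > -1" using pp by (metis mult_less_cancel_left_pos)
    hence "k \<ge> 0" by simp
    thus ?thesis using k pp by simp
  qed
  have sN: "s < c^2 + d^2"
  proof -
    have "r*c < c*c" using r0 c by simp
    moreover have "d*d \<ge> 0" by simp
    ultimately have "s < c*c + d*d" unfolding s_def using de by linarith
    thus ?thesis by (simp add: power2_eq_square)
  qed
  define N where "N = c^2+d^2"
  have N: "N \<noteq> 0" using sN s0 N_def by linarith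
  have "(q*N + s) div N = q + s div N" using N by (metis add.commute div_mult_self1)
  moreover have "s div N = 0" using s0 sN N_def by simp
  ultimately show ?thesis using eq q_def N_def by simp
qed

lemma bp_fst_Suc: "fst (brill_pair p u (Suc n)) = snd (brill_pair p u n)"
  by (cases "brill_pair p u n") (auto simp: Let_def split: prod.split)

lemma ml_fst_Suc: "fst (ml_pair p u (Suc n)) = snd (ml_pair p u n)"
  by (cases "ml_pair p u n") (auto simp: Let_def split: prod.split)

lemma bp_step:
  assumes "brill_pair p u n = ((a,b),(c,d))" "c > 0"
  shows "brill_pair p u (Suc n) = ((c,d),(a - (a div c)*c, b - (a div c)*d))"
  using assms by (simp add: pt_sub_def pt_scale_def)

lemma bp_frozen:
  assumes "brill_pair p u n = ((a,b),(c,d))" "\<not> c > 0"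
  shows "brill_pair p u (Suc n) = ((c,d),(c,d))"
  using assms by simp

lemma bp_inv:
  assumes "0 \<le> u" "u < p"
  shows "(case brill_pair p u n of ((a,b),(c,d)) \<Rightarrow> goodp p u a b c d \<or> (a \<le> 0 \<and> c \<le> 0))"
proof (induction n)
  case 0
  then show ?case using assms by (simp add: goodp_def)
next
  case (Suc n)
  obtain a b c d where e: "brill_pair p u n = ((a,b),(c,d))" by (metis prod.exhaust)
  show ?case
  proof (cases "c > 0")
    case True
    hence g: "goodp p u a b c d" using Suc e by auto
    show ?thesis using good_step[OF g True] bp_step[OF e True] by simp
  next
    case False
    then show ?thesis using bp_frozen[OF e False] by simp
  qed
qed

lemma bp_good:
  assumes "0 \<le> u" "u < p" "brill_pair p u n = ((a,b),(c,d))" "c > 0"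
  shows "goodp p u a b c d"
  using bp_inv[OF assms(1,2), of n] assms(3,4) by auto

lemma bp_mono:
  assumes "0 \<le> u" "u < p"
  shows "fst (fst (brill_pair p u (n+k))) > 0 \<Longrightarrow>
     fst (fst (brill_pair p u (n+k))) \<le> fst (fst (brill_pair p u n)) \<and>
     \<bar>snd (fst (brill_pair p u n))\<bar> \<le> \<bar>snd (fst (brill_pair p u (n+k)))\<bar>"
proof (induction k)
  case 0
  then show ?case by simp
next
  case (Suc k)
  obtain a b c d where e: "brill_pair p u (n+k) = ((a,b),(c,d))" by (metis prod.exhaust)
  have f: "fst (brill_pair p u (n + Suc k)) = (c,d)" using bp_fst_Suc[of p u "n+k"] e by simp
  have c: "c > 0" using Suc.prems f by simp
  have g: "goodp p u a b c d" using bp_good[OF assms e c] .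
  hence "a > 0" "c < a" "\<bar>b\<bar> \<le> \<bar>d\<bar>" unfolding goodp_def by auto
  with Suc.IH e f show ?case by auto
qed


theorem mainTheorem1:
  fixes p u :: int and i :: nat
  assumes "prime p" and "[p = 1] (mod 4)"
    and "[u ^ 2 = - 1] (mod p)" and "1 \<le> u" and "real_of_int u < real_of_int p / 2"
    and "1 \<le> i"
    and "fst (brill p u i) > \<bar>snd (brill p u i)\<bar>"
    and "ml_defined_upto p u i"
  shows "brill_q p u i = ml_q p u i
         \<and> brill_q p u i =
             \<lfloor>real_of_int (fst (brill p u (i - 1)) * fst (brill p u i)
                             + snd (brill p u (i - 1)) * snd (brill p u i))
              / real_of_int (fst (brill p u i) ^ 2 + snd (brill p u i) ^ 2)\<rfloor>
         \<and> brill p u i = ml p u i \<and> brill p u (i + 1) = ml p u (i + 1)"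
proof -
  have pp: "p > 0" using assms(1) prime_gt_0_int by blast
  have u0: "0 \<le> u" using assms(4) by simp
  have up: "u < p" using assms(5) pp by linarith
  have pu: "p dvd u^2 + 1" using assms(3) by (simp add: cong_iff_dvd_diff)
  obtain m where m: "i = Suc m" using assms(6) by (cases i) auto
  have xi: "fst (fst (brill_pair p u i)) > \<bar>snd (fst (brill_pair p u i))\<bar>"
    using assms(7) unfolding brill_def .
  have eqs: "n \<le> i \<Longrightarrow> ml_pair p u n = brill_pair p u n" for n
  proof (induction n)
    case 0 then show ?case by simp
  next
    case (Suc n)
    hence IH: "ml_pair p u n = brill_pair p u n" by simp
    obtain a b c d where e: "brill_pair p u n = ((a,b),(c,d))" by (metis prod.exhaust)
    have f: "fst (brill_pair p u (Suc n)) = (c,d)" using bp_fst_Suc[of p u n] e by simp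
    have mo: "fst (fst (brill_pair p u i)) \<le> c \<and> \<bar>d\<bar> \<le> \<bar>snd (fst (brill_pair p u i))\<bar>"
      using bp_mono[OF u0 up, of "Suc n" "i - Suc n"] Suc.prems xi f by simp
    hence dc: "\<bar>d\<bar> < c" using xi by linarith
    hence c: "c > 0" by linarith
    have g: "goodp p u a b c d" using bp_good[OF u0 up e c] .
    have "pt_sqnorm (ml p u (Suc n)) \<le> pt_sqnorm (ml p u (Suc n - 1))"
      using assms(8) Suc.prems unfolding ml_defined_upto_def
      by (metis atLeastAtMost_iff le_add1 plus_1_eq_Suc)
    moreover have "ml p u (Suc n) = (c,d)" unfolding ml_def using ml_fst_Suc[of p u n] IH e by simp
    moreover have "ml p u n = (a,b)" unfolding ml_def using IH e by simp
    ultimately have cond: "pt_sqnorm (c,d) \<le> pt_sqnorm (a,b)" by simp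
    have mq: "ml_quot (a,b) (c,d) = a div c"
    proof -
      have "ml_quot (a,b) (c,d) = (c*a + d*b) div (c*c + d*d)"
        unfolding ml_quot_def pt_dot_def pt_sqnorm_def fst_conv snd_conv by (rule floor_divide_of_int_eq)
      also have "\<dots> = (a*c + b*d) div (c^2 + d^2)" by (simp add: algebra_simps power2_eq_square)
      finally have "ml_quot (a,b) (c,d) = (a*c + b*d) div (c^2 + d^2)" .
      thus ?thesis using key[OF g pp pu dc] by simp
    qed
    have "ml_pair p u (Suc n) = ((c,d), pt_sub (a,b) (pt_scale (a div c) (c,d)))"
      using IH e cond mq by simp
    then show ?case using bp_step[OF e c] by (simp add: pt_sub_def pt_scale_def)
  qed
  have Bi: "ml_pair p u i = brill_pair p u i" using eqs by simp
  have Bm: "ml_pair p u m = brill_pair p u m" using eqs m by simp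
  obtain a b c d where e: "brill_pair p u m = ((a,b),(c,d))" by (metis prod.exhaust)
  have bi: "brill p u i = (c,d)" unfolding brill_def m using bp_fst_Suc[of p u m] e by simp
  have bm: "brill p u (i - 1) = (a,b)" unfolding brill_def m using e by simp
  have dc: "\<bar>d\<bar> < c" using assms(7) bi by simp
  hence c: "c > 0" by linarith
  have g: "goodp p u a b c d" using bp_good[OF u0 up e c] .
  have k: "(a*c + b*d) div (c^2 + d^2) = a div c" using key[OF g pp pu dc] .
  have q1: "brill_q p u i = a div c" unfolding brill_q_def using bi bm
    by (simp add: floor_divide_of_int_eq)
  have q2: "ml_q p u i = a div c"
  proof -
    have "ml p u i = (c,d)" "ml p u (i - 1) = (a,b)" using bi bm Bi Bm m unfolding ml_def brill_def by simp_all
    hence "ml_q p u i = (c*a + d*b) div (c*c + d*d)"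
      unfolding ml_q_def ml_quot_def pt_dot_def pt_sqnorm_def
      by (simp only: fst_conv snd_conv floor_divide_of_int_eq)
    also have "\<dots> = (a*c + b*d) div (c^2 + d^2)" by (simp add: algebra_simps power2_eq_square)
    finally have "ml_q p u i = (a*c + b*d) div (c^2 + d^2)" .
    thus ?thesis using k by simp
  qed
  have q3: "\<lfloor>real_of_int (fst (brill p u (i - 1)) * fst (brill p u i)
                             + snd (brill p u (i - 1)) * snd (brill p u i))
              / real_of_int (fst (brill p u i) ^ 2 + snd (brill p u i) ^ 2)\<rfloor> = a div c"
    using bi bm k by (simp only: fst_conv snd_conv floor_divide_of_int_eq)
  have e1: "brill p u i = ml p u i" unfolding brill_def ml_def using Bi by simp
  have e2: "brill p u (i+1) = ml p u (i+1)" unfolding brill_def ml_def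
    using bp_fst_Suc[of p u i] ml_fst_Suc[of p u i] Bi by simp
  show ?thesis using q1 q2 q3 e1 e2 by simp
qed

end
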